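(* Let $(N_1,m_1)$ and $(N_2,m_2)$ be labeled marked Petri nets and $E$ a system of linear constraints with $(N_1,m_1)\vartriangleright_E(N_2,m_2)$, and let $(M,m)$ be a labeled marked Petri net that is compatible with respect to this equivalence. Then $(N_1,m_1)\,\|\,(M,m)\vartriangleright_E(N_2,m_2)\,\|\,(M,m)$.
   Context: A Petri net $N=(P,T,\mathrm{Pre},\mathrm{Post})$ has a finite set of places $P$, a finite set of transitions $T$ disjoint from $P$, and flow functions $\mathrm{Pre},\mathrm{Post}:T\to(P\to\mathbb N)$. A marking is a map $m:P\to\mathbb N$. Transition $t$ is enabled at $m$ if $m(p)\ge\mathrm{Pre}(t,p)$ for all $p$; firing it yields $m'=m-\mathrm{Pre}(t)+\mathrm{Post}(t)$. A firing sequence $\varrho$ leads from $m$ to $m'$ ($m\overset{\varrho}{\Rightarrow}m'$) if its transitions can be fired successively from $m$ reaching $m'$. A labeled net has a labeling $l:T\to\Sigma\cup\{\tau\}$ ($\tau\notin\Sigma$ silent), extended to sequences by $l(\epsilon)=\epsilon$, $\tau$ mapped to $\epsilon$, $l(\varrho t)=l(\varrho)l(t)$. Formulas are Boolean combinations of linear (in)equalities over integer variables; place names are used as variables. For a marking $m$ over $P$, $\underline m\triangleq\bigwedge_{p\in P}(p=m(p))$; $m\models\phi$ means $\phi\wedge\underline m$ is satisfiable over the integers. Markings $m_1$ over $P_1$, $m_2$ over $P_2$ are compatible if they agree on $P_1\cap P_2$; then $m_1\uplus m_2$ is the marking on $P_1\cup P_2$ agreeing with both; $m_1\uplus m_2\models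 E$ presupposes compatibility. $E$-abstraction (for $N_1,N_2$ with labelings $l_1,l_2$ over the same alphabet): $(N_1,m_1)\sqsupseteq_E(N_2,m_2)$ iff (A1) $m_1\uplus m_2\models E$; and (A2) for every firing sequence $m_1\overset{\varrho_1}{\Rightarrow}m_1'$ in $N_1$ there is at least one marking $m_2'$ over $P_2$ with $m_1'\uplus m_2'\models E$, and for every marking $m_2'$ over $P_2$ with $m_1'\uplus m_2'\models E$ there is a firing sequence $\varrho_2$ of $N_2$ with $m_2\overset{\varrho_2}{\Rightarrow}m_2'$ and $l_1(\varrho_1)=l_2(\varrho_2)$. $(N_1,m_1)\vartriangleright_E(N_2,m_2)$ means both directions hold. The fresh variables of $(N_1,m_1)\vartriangleright_E(N_2,m_2)$ are the variables in $E$ not in $P_1\cup P_2$. A net $M$ with places $P_M$ is compatible with respect to this statement when $(P_1\cup P_2)\cap P_M=\emptyset$ and no fresh variable of the statement is a place of $M$. Synchronous product: for labeled nets $N_a=(P_a,T_a,\mathrm{Pre}_a,\mathrm{Post}_a)$ with labeling $l_a$ over alphabet $\Sigma_a$ and $N_b$ likewise with $l_b$ over $\Sigma_b$, with $P_a\cap P_b=\emptyset$, $N_a\|N_b$ has places $P_a\cup P_b$ and transitions: $(t,\circ)$ for $t\in T_a$ with $l_a(t)\notin\Sigma_b$, labeled $l_a(t)$; $(\circ,t)$ for $t\in T_b$ with $l_b(t)\notin\Sigma_a$, labeled $l_b(t)$; and $(t_a,t_b)$ whenever $l_a(t_a)=l_b(t_b)$, labeled $l_a(t_a)$. $\mathrm{Pre}((t_a,t_b),p)=\mathrm{Pre}_a(t_a,p)$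 if $p\in P_a$ and $t_a\ne\circ$, $=\mathrm{Pre}_b(t_b,p)$ if $p\in P_b$ and $t_b\ne\circ$, and $0$ otherwise; similarly for $\mathrm{Post}$. For marked nets, $(N_a,m_a)\|(N_b,m_b)\triangleq(N_a\|N_b,m_a\|m_b)$ where $m_a\|m_b$ is the union marking on $P_a\cup P_b$. *)

theory Defs
  imports Main
begin

datatype 'v lterm = LConst int | LVar 'v | LAdd "'v lterm" "'v lterm" | LMul int "'v lterm"

datatype 'v formula =
    FTrue
  | FEq "'v lterm" "'v lterm"
  | FLe "'v lterm" "'v lterm"
  | FNot "'v formula"
  | FAnd "'v formula" "'v formula"
  | FOr "'v formula" "'v formula"

primrec lval :: "'v lterm \<Rightarrow> ('v \<Rightarrow> int) \<Rightarrow> int" where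
  "lval (LConst c) v = c"
| "lval (LVar x) v = v x"
| "lval (LAdd a b) v = lval a v + lval b v"
| "lval (LMul c a) v = c * lval a v"

primrec holds :: "'v formula \<Rightarrow> ('v \<Rightarrow> int) \<Rightarrow> bool" where
  "holds FTrue v = True"
| "holds (FEq a b) v = (lval a v = lval b v)"
| "holds (FLe a b) v = (lval a v \<le> lval b v)"
| "holds (FNot f) v = (\<not> holds f v)"
| "holds (FAnd f g) v = (holds f v \<and> holds g v)"
| "holds (FOr f g) v = (holds f v \<or> holds g v)"

primrec lvars :: "'v lterm \<Rightarrow> 'v set" where
  "lvars (LConst c) = {}"
| "lvars (LVar x) = {x}"
| "lvars (LAdd a b) = lvars a \<union> lvars b"
| "lvars (LMul c a) = lvars a"

primrec fvars :: "'v formula \<Rightarrow> 'v set" where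
  "fvars FTrue = {}"
| "fvars (FEq a b) = lvars a \<union> lvars b"
| "fvars (FLe a b) = lvars a \<union> lvars b"
| "fvars (FNot f) = fvars f"
| "fvars (FAnd f g) = fvars f \<union> fvars g"
| "fvars (FOr f g) = fvars f \<union> fvars g"

text \<open>Place names are the variables of type 'v. Labels: None is the silent label tau.\<close>

record ('v, 't, 'a) pnet =
  places :: "'v set"
  trans  :: "'t set"
  pre    :: "'t \<Rightarrow> 'v \<Rightarrow> nat"
  post   :: "'t \<Rightarrow> 'v \<Rightarrow> nat"
  lab    :: "'t \<Rightarrow> 'a option"
  alph   :: "'a set"

definition wf_net :: "('v, 't, 'a) pnet \<Rightarrow> bool" where
  "wf_net N \<longleftrightarrow> finite (places N) \<and> finite (trans N)
     \<and> (\<forall>t p. p \<notin> places N \<longrightarrow> pre N t p = 0 \<and> post N t p = 0)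
     \<and> (\<forall>t \<in> trans N. case lab N t of None \<Rightarrow> True | Some a \<Rightarrow> a \<in> alph N)"

definition marking_on :: "'v set \<Rightarrow> ('v \<Rightarrow> nat) \<Rightarrow> bool" where
  "marking_on P m \<longleftrightarrow> (\<forall>x. x \<notin> P \<longrightarrow> m x = 0)"

definition enabled :: "('v, 't, 'a) pnet \<Rightarrow> ('v \<Rightarrow> nat) \<Rightarrow> 't \<Rightarrow> bool" where
  "enabled N m t \<longleftrightarrow> t \<in> trans N \<and> (\<forall>p \<in> places N. pre N t p \<le> m p)"

definition fire :: "('v, 't, 'a) pnet \<Rightarrow> ('v \<Rightarrow> nat) \<Rightarrow> 't \<Rightarrow> ('v \<Rightarrow> nat)" where
  "fire N m t = (\<lambda>p. m p - pre N t p + post N t p)"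

fun fires :: "('v, 't, 'a) pnet \<Rightarrow> ('v \<Rightarrow> nat) \<Rightarrow> 't list \<Rightarrow> ('v \<Rightarrow> nat) \<Rightarrow> bool" where
  "fires N m [] m' \<longleftrightarrow> m' = m"
| "fires N m (t # ts) m' \<longleftrightarrow> enabled N m t \<and> fires N (fire N m t) ts m'"

definition word :: "('v, 't, 'a) pnet \<Rightarrow> 't list \<Rightarrow> 'a list" where
  "word N ts = concat (map (\<lambda>t. case lab N t of None \<Rightarrow> [] | Some a \<Rightarrow> [a]) ts)"

definition msat :: "'v set \<Rightarrow> ('v \<Rightarrow> nat) \<Rightarrow> 'v formula \<Rightarrow> bool" where
  "msat P m \<phi> \<longleftrightarrow> (\<exists>v. (\<forall>x \<in> P. v x = int (m x)) \<and> holds \<phi> v)"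

definition compatible :: "'v set \<Rightarrow> ('v \<Rightarrow> nat) \<Rightarrow> 'v set \<Rightarrow> ('v \<Rightarrow> nat) \<Rightarrow> bool" where
  "compatible P1 m1 P2 m2 \<longleftrightarrow> (\<forall>x \<in> P1 \<inter> P2. m1 x = m2 x)"

definition munion :: "'v set \<Rightarrow> ('v \<Rightarrow> nat) \<Rightarrow> ('v \<Rightarrow> nat) \<Rightarrow> ('v \<Rightarrow> nat)" where
  "munion P1 m1 m2 = (\<lambda>x. if x \<in> P1 then m1 x else m2 x)"

definition usat :: "'v set \<Rightarrow> ('v \<Rightarrow> nat) \<Rightarrow> 'v set \<Rightarrow> ('v \<Rightarrow> nat) \<Rightarrow> 'v formula \<Rightarrow> bool" where
  "usat P1 m1 P2 m2 E \<longleftrightarrow> compatible P1 m1 P2 m2 \<and> msat (P1 \<union> P2) (munion P1 m1 m2) E"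

definition abstraction ::
  "('v, 't1, 'a) pnet \<Rightarrow> ('v \<Rightarrow> nat) \<Rightarrow> 'v formula \<Rightarrow> ('v, 't2, 'a) pnet \<Rightarrow> ('v \<Rightarrow> nat) \<Rightarrow> bool" where
  "abstraction N1 m1 E N2 m2 \<longleftrightarrow>
     usat (places N1) m1 (places N2) m2 E \<and>
     (\<forall>\<rho>1 m1'. fires N1 m1 \<rho>1 m1' \<longrightarrow>
        (\<exists>m2'. marking_on (places N2) m2' \<and> usat (places N1) m1' (places N2) m2' E) \<and>
        (\<forall>m2'. marking_on (places N2) m2' \<and> usat (places N1) m1' (places N2) m2' E \<longrightarrow>
           (\<exists>\<rho>2. fires N2 m2 \<rho>2 m2' \<and> word N1 \<rho>1 = word N2 \<rho>2)))"

definition equivalence ::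
  "('v, 't1, 'a) pnet \<Rightarrow> ('v \<Rightarrow> nat) \<Rightarrow> 'v formula \<Rightarrow> ('v, 't2, 'a) pnet \<Rightarrow> ('v \<Rightarrow> nat) \<Rightarrow> bool" where
  "equivalence N1 m1 E N2 m2 \<longleftrightarrow> abstraction N1 m1 E N2 m2 \<and> abstraction N2 m2 E N1 m1"

definition fresh_vars :: "('v, 't1, 'a) pnet \<Rightarrow> ('v, 't2, 'a) pnet \<Rightarrow> 'v formula \<Rightarrow> 'v set" where
  "fresh_vars N1 N2 E = fvars E - (places N1 \<union> places N2)"

definition compatible_net ::
  "('v, 't1, 'a) pnet \<Rightarrow> ('v, 't2, 'a) pnet \<Rightarrow> 'v formula \<Rightarrow> ('v, 't3, 'a) pnet \<Rightarrow> bool" where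
  "compatible_net N1 N2 E M \<longleftrightarrow>
     (places N1 \<union> places N2) \<inter> places M = {} \<and> fresh_vars N1 N2 E \<inter> places M = {}"

text \<open>Transitions of the product are pairs; None plays the role of the idle component.\<close>

definition sync :: "('v, 'ta, 'a) pnet \<Rightarrow> ('v, 'tb, 'a) pnet \<Rightarrow> ('v, 'ta option \<times> 'tb option, 'a) pnet" where
  "sync Na Nb = \<lparr>
     places = places Na \<union> places Nb,
     trans = {(Some t, None) | t. t \<in> trans Na \<and> (case lab Na t of None \<Rightarrow> True | Some a \<Rightarrow> a \<notin> alph Nb)}
           \<union> {(None, Some u) | u. u \<in> trans Nb \<and> (case lab Nb u of None \<Rightarrow> True | Some a \<Rightarrow> a \<notin> alph Na)}
           \<union> {(Some t, Some u) | t u. t \<in> trans Na \<and> u \<in> trans Nb \<and> lab Na t = lab Nb u \<and> lab Na t \<noteq> None},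
     pre = (\<lambda>(x, y) p. if p \<in> places Na then (case x of Some t \<Rightarrow> pre Na t p | None \<Rightarrow> 0)
                       else if p \<in> places Nb then (case y of Some u \<Rightarrow> pre Nb u p | None \<Rightarrow> 0) else 0),
     post = (\<lambda>(x, y) p. if p \<in> places Na then (case x of Some t \<Rightarrow> post Na t p | None \<Rightarrow> 0)
                       else if p \<in> places Nb then (case y of Some u \<Rightarrow> post Nb u p | None \<Rightarrow> 0) else 0),
     lab = (\<lambda>(x, y). case x of Some t \<Rightarrow> lab Na t | None \<Rightarrow> (case y of Some u \<Rightarrow> lab Nb u | None \<Rightarrow> None)),
     alph = alph Na \<union> alph Nb \<rparr>"

definition msync :: "('v, 'ta, 'a) pnet \<Rightarrow> ('v \<Rightarrow> nat) \<Rightarrow> ('v \<Rightarrow> nat) \<Rightarrow> ('v \<Rightarrow> nat)" where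
  "msync Na ma mb = munion (places Na) ma mb"

end

theory Submission
  imports Defs
begin

lemma lval_cong: "(\<And>x. x \<in> lvars a \<Longrightarrow> v x = v' x) \<Longrightarrow> lval a v = lval a v'"
  by (induction a) auto

lemma holds_cong: "(\<And>x. x \<in> fvars f \<Longrightarrow> v x = v' x) \<Longrightarrow> holds f v = holds f v'"
proof (induction f)
  case (FEq a b) then show ?case using lval_cong[of a v v'] lval_cong[of b v v'] by auto
next
  case (FLe a b) then show ?case using lval_cong[of a v v'] lval_cong[of b v v'] by auto
qed auto

definition fo :: "('v, 't, 'a) pnet \<Rightarrow> ('v \<Rightarrow> nat) \<Rightarrow> 't option \<Rightarrow> ('v \<Rightarrow> nat)" where
  "fo N m x = (case x of None \<Rightarrow> m | Some t \<Rightarrow> fire N m t)"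

primrec pr1 :: "('a option \<times> 'b option) list \<Rightarrow> 'a list" where
  "pr1 [] = []"
| "pr1 (z # r) = (case fst z of None \<Rightarrow> pr1 r | Some t \<Rightarrow> t # pr1 r)"

primrec pr2 :: "('a option \<times> 'b option) list \<Rightarrow> 'b list" where
  "pr2 [] = []"
| "pr2 (z # r) = (case snd z of None \<Rightarrow> pr2 r | Some t \<Rightarrow> t # pr2 r)"

lemma fire_sync:
  assumes "wf_net Nb"
  shows "fire (sync Na Nb) (munion (places Na) ma mb) (x, y) = munion (places Na) (fo Na ma x) (fo Nb mb y)"
  using assms unfolding fire_def sync_def munion_def wf_net_def fo_def
  by (auto split: option.splits)

lemma enabled_sync:
  assumes "places Na \<inter> places Nb = {}"
  shows "enabled (sync Na Nb) (munion (places Na) ma mb) (x, y) \<longleftrightarrow>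
    (x, y) \<in> trans (sync Na Nb) \<and> (\<forall>t. x = Some t \<longrightarrow> (\<forall>p\<in>places Na. pre Na t p \<le> ma p))
     \<and> (\<forall>u. y = Some u \<longrightarrow> (\<forall>p\<in>places Nb. pre Nb u p \<le> mb p))"
  using assms unfolding enabled_def munion_def
  apply (simp add: sync_def split: option.splits)
  apply safe
  apply auto
  done

lemma trans_sync_D:
  "(x, y) \<in> trans (sync Na Nb) \<Longrightarrow> (\<forall>t. x = Some t \<longrightarrow> t \<in> trans Na) \<and> (\<forall>u. y = Some u \<longrightarrow> u \<in> trans Nb)"
  unfolding sync_def by auto

lemma proj_fires:
  assumes "wf_net Nb" "places Na \<inter> places Nb = {}"
  shows "fires (sync Na Nb) (munion (places Na) ma mb) \<rho> m' \<Longrightarrow>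
    \<exists>ma' mb'. fires Na ma (pr1 \<rho>) ma' \<and> fires Nb mb (pr2 \<rho>) mb' \<and> m' = munion (places Na) ma' mb'"
proof (induction \<rho> arbitrary: ma mb)
  case Nil
  then show ?case by auto
next
  case (Cons z r)
  obtain x y where z: "z = (x, y)" by force
  have fs: "fire (sync Na Nb) (munion (places Na) ma mb) (x, y) = munion (places Na) (fo Na ma x) (fo Nb mb y)"
    by (rule fire_sync[OF assms(1)])
  from Cons.prems z have en: "enabled (sync Na Nb) (munion (places Na) ma mb) (x, y)"
    and fr: "fires (sync Na Nb) (munion (places Na) (fo Na ma x) (fo Nb mb y)) r m'"
    by (auto simp: fs[symmetric])
  from Cons.IH[OF fr] obtain ma' mb' where
    h: "fires Na (fo Na ma x) (pr1 r) ma'" "fires Nb (fo Nb mb y) (pr2 r) mb'" "m' = munion (places Na) ma' mb'"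
    by blast
  from en have en': "(x, y) \<in> trans (sync Na Nb)" "(\<forall>t. x = Some t \<longrightarrow> (\<forall>p\<in>places Na. pre Na t p \<le> ma p))"
     "(\<forall>u. y = Some u \<longrightarrow> (\<forall>p\<in>places Nb. pre Nb u p \<le> mb p))"
    using enabled_sync[OF assms(2)] by auto
  have "fires Na ma (pr1 ((x, y) # r)) ma'"
    using h(1) en' trans_sync_D[OF en'(1)] by (cases x) (auto simp: fo_def enabled_def)
  moreover have "fires Nb mb (pr2 ((x, y) # r)) mb'"
    using h(2) en' trans_sync_D[OF en'(1)] by (cases y) (auto simp: fo_def enabled_def)
  ultimately show ?case using h(3) z by blast
qed

lemma inter_fires:
  assumes "wf_net Nb" "places Na \<inter> places Nb = {}"
  shows "set \<rho> \<subseteq> trans (sync Na Nb) \<Longrightarrow> fires Na ma (pr1 \<rho>) ma' \<Longrightarrow> fires Nb mb (pr2 \<rho>) mb' \<Longrightarrow>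
    fires (sync Na Nb) (munion (places Na) ma mb) \<rho> (munion (places Na) ma' mb')"
proof (induction \<rho> arbitrary: ma mb)
  case Nil
  then show ?case by auto
next
  case (Cons z r)
  obtain x y where z: "z = (x, y)" by force
  have tr: "(x, y) \<in> trans (sync Na Nb)" using Cons.prems z by auto
  have a: "fires Na (fo Na ma x) (pr1 r) ma' \<and> (\<forall>t. x = Some t \<longrightarrow> (\<forall>p\<in>places Na. pre Na t p \<le> ma p))"
    using Cons.prems(2) z by (cases x) (auto simp: fo_def enabled_def)
  have b: "fires Nb (fo Nb mb y) (pr2 r) mb' \<and> (\<forall>u. y = Some u \<longrightarrow> (\<forall>p\<in>places Nb. pre Nb u p \<le> mb p))"
    using Cons.prems(3) z by (cases y) (auto simp: fo_def enabled_def)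
  have "fires (sync Na Nb) (munion (places Na) (fo Na ma x) (fo Nb mb y)) r (munion (places Na) ma' mb')"
    using Cons.IH Cons.prems(1) a b by auto
  moreover have "fire (sync Na Nb) (munion (places Na) ma mb) (x, y) = munion (places Na) (fo Na ma x) (fo Nb mb y)"
    by (rule fire_sync[OF assms(1)])
  moreover have "enabled (sync Na Nb) (munion (places Na) ma mb) (x, y)"
    using tr a b enabled_sync[OF assms(2)] by blast
  ultimately show ?case using z by simp
qed

lemma fires_marking_on:
  "wf_net N \<Longrightarrow> marking_on (places N) m \<Longrightarrow> fires N m \<rho> m' \<Longrightarrow> marking_on (places N) m'"
proof (induction \<rho> arbitrary: m)
  case Nil then show ?case by auto
next
  case (Cons t r)
  have "marking_on (places N) (fire N m t)"
    using Cons.prems unfolding marking_on_def fire_def wf_net_def by auto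
  then show ?case using Cons by auto
qed

lemma fires_trans: "fires N m \<rho> m' \<Longrightarrow> set \<rho> \<subseteq> trans N"
  by (induction \<rho> arbitrary: m) (auto simp: enabled_def)


lemma word_Nil[simp]: "word N [] = []" by (simp add: word_def)
lemma word_Cons[simp]: "word N (t # r) = (case lab N t of None \<Rightarrow> word N r | Some a \<Rightarrow> a # word N r)"
  by (simp add: word_def split: option.splits)
lemma word_append[simp]: "word N (xs @ ys) = word N xs @ word N ys" by (simp add: word_def)

lemma word_empty: "word N \<rho> = [] \<Longrightarrow> \<forall>x\<in>set \<rho>. lab N x = None"
  by (induction \<rho>) (auto split: option.splits)

lemma word_split: "word N \<rho> = a # w \<Longrightarrow>
  \<exists>s u rest. \<rho> = s @ u # rest \<and> (\<forall>x\<in>set s. lab N x = None) \<and> lab N u = Some a \<and> word N rest = w"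
proof (induction \<rho>)
  case Nil then show ?case by simp
next
  case (Cons t r)
  show ?case
  proof (cases "lab N t")
    case None
    then obtain s u rest where "r = s @ u # rest" "\<forall>x\<in>set s. lab N x = None" "lab N u = Some a" "word N rest = w"
      using Cons by auto
    then show ?thesis using None by (intro exI[of _ "t # s"]) auto
  next
    case (Some b)
    then show ?thesis using Cons.prems by (intro exI[of _ "[]"]) auto
  qed
qed

lemma pr_map_sil[simp]: "pr1 (map (\<lambda>u. (Some u, None)) s) = s" "pr2 (map (\<lambda>u. (Some u, None)) s) = []"
  by (induction s) auto

lemma pr_append[simp]: "pr1 (xs @ ys) = pr1 xs @ pr1 ys" "pr2 (xs @ ys) = pr2 xs @ pr2 ys"
  by (induction xs) (auto split: option.splits)

lemma lab_sync[simp]: "lab (sync Na Nb) (x, y) = (case x of Some t \<Rightarrow> lab Na t | None \<Rightarrow> (case y of Some u \<Rightarrow> lab Nb u | None \<Rightarrow> None))"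
  by (simp add: sync_def)

lemma sil_props:
  assumes "\<forall>x\<in>set s. lab N x = None" "set s \<subseteq> trans N"
  shows "set (map (\<lambda>u. (Some u, None)) s) \<subseteq> trans (sync N M)"
    "word (sync N M) (map (\<lambda>u. (Some u, None)) s) = []"
  using assms by (auto simp: sync_def word_def)

lemma build:
  assumes "alph N1 = alph N2"
  shows "set \<rho> \<subseteq> trans (sync N1 M) \<Longrightarrow> set \<rho>2 \<subseteq> trans N2 \<Longrightarrow> word N1 (pr1 \<rho>) = word N2 \<rho>2 \<Longrightarrow>
    \<exists>\<rho>'. set \<rho>' \<subseteq> trans (sync N2 M) \<and> pr1 \<rho>' = \<rho>2 \<and> pr2 \<rho>' = pr2 \<rho> \<and> word (sync N2 M) \<rho>' = word (sync N1 M) \<rho>"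
proof (induction \<rho> arbitrary: \<rho>2)
  case Nil
  then have "\<forall>x\<in>set \<rho>2. lab N2 x = None" using word_empty[of N2 \<rho>2] by simp
  then show ?case using sil_props[of \<rho>2 N2 M] Nil by (intro exI[of _ "map (\<lambda>u. (Some u, None)) \<rho>2"]) auto
next
  case (Cons z r)
  obtain x y where z: "z = (x, y)" by force
  have tr: "(x, y) \<in> trans (sync N1 M)" and trr: "set r \<subseteq> trans (sync N1 M)" using Cons.prems z by auto
  show ?case
  proof (cases x)
    case None
    then obtain v where y: "y = Some v" using tr by (auto simp: sync_def)
    have trv: "(None, Some v) \<in> trans (sync N2 M)" using tr None y assms by (auto simp: sync_def split: option.splits)
    obtain \<rho>' where h: "set \<rho>' \<subseteq> trans (sync N2 M)" "pr1 \<rho>' = \<rho>2" "pr2 \<rho>' = pr2 r"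
      "word (sync N2 M) \<rho>' = word (sync N1 M) r"
      using Cons.IH[OF trr Cons.prems(2)] Cons.prems(3) z None by auto
    show ?thesis using h trv z None y by (intro exI[of _ "(None, Some v) # \<rho>'"]) (auto split: option.splits)
  next
    case (Some t)
    show ?thesis
    proof (cases "lab N1 t")
      case None
      then have y: "y = None" using tr Some by (auto simp: sync_def)
      obtain \<rho>' where h: "set \<rho>' \<subseteq> trans (sync N2 M)" "pr1 \<rho>' = \<rho>2" "pr2 \<rho>' = pr2 r"
        "word (sync N2 M) \<rho>' = word (sync N1 M) r"
        using Cons.IH[OF trr Cons.prems(2)] Cons.prems(3) z None Some by auto
      show ?thesis using h z None y Some by (intro exI[of _ "\<rho>'"]) auto
    next
      case (Some a)
      note xt = \<open>x = Some t\<close>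
      have "word N2 \<rho>2 = a # word N1 (pr1 r)" using Cons.prems(3) z xt Some by simp
      from word_split[OF this] obtain s u rest where sp: "\<rho>2 = s @ u # rest" "\<forall>x\<in>set s. lab N2 x = None"
        "lab N2 u = Some a" "word N2 rest = word N1 (pr1 r)" by blast
      have st: "set s \<subseteq> trans N2" "u \<in> trans N2" "set rest \<subseteq> trans N2" using Cons.prems(2) sp(1) by auto
      obtain \<rho>' where h: "set \<rho>' \<subseteq> trans (sync N2 M)" "pr1 \<rho>' = rest" "pr2 \<rho>' = pr2 r"
        "word (sync N2 M) \<rho>' = word (sync N1 M) r"
        using Cons.IH[OF trr st(3)] sp(4) by auto
      have tru: "(Some u, y) \<in> trans (sync N2 M)"
        using tr xt Some sp(3) st(2) assms by (cases y) (auto simp: sync_def split: option.splits, metis)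
      let ?r = "map (\<lambda>u. (Some u, None)) s @ (Some u, y) # \<rho>'"
      have "set ?r \<subseteq> trans (sync N2 M)" using sil_props[OF sp(2) st(1)] tru h(1) by auto
      moreover have "pr1 ?r = \<rho>2" using sp(1) h(2) by simp
      moreover have "pr2 ?r = pr2 (z # r)" using h(3) z by (cases y) auto
      moreover have "word (sync N2 M) ?r = word (sync N1 M) (z # r)"
        using sil_props[OF sp(2) st(1)] h(4) z xt Some sp(3) by simp
      ultimately show ?thesis by blast
    qed
  qed
qed


lemma places_sync[simp]: "places (sync Na Nb) = places Na \<union> places Nb"
  by (simp add: sync_def)

lemma usat_lift:
  assumes "P1 \<inter> PM = {}" "P2 \<inter> PM = {}" "fvars E \<inter> PM = {}" "usat P1 a P2 b E"
  shows "usat (P1 \<union> PM) (munion P1 a c) (P2 \<union> PM) (munion P2 b c) E"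
proof -
  from assms(4) obtain v where c: "compatible P1 a P2 b" and v: "\<forall>x \<in> P1 \<union> P2. v x = int (munion P1 a b x)" "holds E v"
    unfolding usat_def msat_def by blast
  define v' where "v' = (\<lambda>x. if x \<in> PM then int (c x) else v x)"
  have "\<And>x. x \<in> fvars E \<Longrightarrow> v x = v' x" using assms(3) unfolding v'_def by auto
  then have "holds E v'" using v(2) holds_cong[of E v v'] by simp
  moreover have "\<forall>x \<in> P1 \<union> PM \<union> (P2 \<union> PM). v' x = int (munion (P1 \<union> PM) (munion P1 a c) (munion P2 b c) x)"
    using v(1) assms(1,2) unfolding v'_def munion_def by auto
  moreover have "compatible (P1 \<union> PM) (munion P1 a c) (P2 \<union> PM) (munion P2 b c)"
    using c assms(1,2) unfolding compatible_def munion_def by auto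
  ultimately show ?thesis unfolding usat_def msat_def by blast
qed

lemma usat_restrict:
  assumes "P1 \<inter> PM = {}" "P2 \<inter> PM = {}" "usat (P1 \<union> PM) X (P2 \<union> PM) Y E"
  shows "usat P1 X P2 (\<lambda>x. if x \<in> P2 then Y x else 0) E" "\<forall>x\<in>PM. X x = Y x"
proof -
  from assms(3) obtain v where c: "compatible (P1 \<union> PM) X (P2 \<union> PM) Y"
    and v: "\<forall>x \<in> P1 \<union> PM \<union> (P2 \<union> PM). v x = int (munion (P1 \<union> PM) X Y x)" "holds E v"
    unfolding usat_def msat_def by blast
  have "\<forall>x \<in> P1 \<union> P2. v x = int (munion P1 X (\<lambda>x. if x \<in> P2 then Y x else 0) x)"
    using v(1) c assms(1,2) unfolding munion_def compatible_def by auto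
  moreover have "compatible P1 X P2 (\<lambda>x. if x \<in> P2 then Y x else 0)"
    using c unfolding compatible_def by auto
  ultimately show "usat P1 X P2 (\<lambda>x. if x \<in> P2 then Y x else 0) E"
    using v(2) unfolding usat_def msat_def by blast
  show "\<forall>x\<in>PM. X x = Y x" using c unfolding compatible_def by auto
qed

lemma lift:
  assumes wa: "wf_net Na" and wb: "wf_net Nb" and wm: "wf_net M" and al: "alph Na = alph Nb"
    and mm: "marking_on (places M) m" and ab: "abstraction Na ma E Nb mb"
    and da: "places Na \<inter> places M = {}" and db: "places Nb \<inter> places M = {}"
    and fv: "fvars E \<inter> places M = {}"
  shows "abstraction (sync Na M) (msync Na ma m) E (sync Nb M) (msync Nb mb m)"
  unfolding abstraction_def
proof (intro conjI allI impI)
  show "usat (places (sync Na M)) (msync Na ma m) (places (sync Nb M)) (msync Nb mb m) E"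
    using usat_lift[OF da db fv] ab unfolding abstraction_def msync_def by simp
next
  fix \<rho> m1'
  assume fr: "fires (sync Na M) (msync Na ma m) \<rho> m1'"
  from proj_fires[OF wm da] fr obtain ma' mM' where
    p: "fires Na ma (pr1 \<rho>) ma'" "fires M m (pr2 \<rho>) mM'" "m1' = munion (places Na) ma' mM'"
    unfolding msync_def by blast
  have mM: "marking_on (places M) mM'" using fires_marking_on[OF wm mm p(2)] .
  from ab p(1) have ex: "\<exists>m2'. marking_on (places Nb) m2' \<and> usat (places Na) ma' (places Nb) m2' E"
    and all: "\<And>m2'. marking_on (places Nb) m2' \<Longrightarrow> usat (places Na) ma' (places Nb) m2' E \<Longrightarrow>
           (\<exists>\<rho>2. fires Nb mb \<rho>2 m2' \<and> word Na (pr1 \<rho>) = word Nb \<rho>2)"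
    unfolding abstraction_def by blast+
  from ex obtain m2' where m2': "marking_on (places Nb) m2'" "usat (places Na) ma' (places Nb) m2' E" by blast
  have "marking_on (places (sync Nb M)) (munion (places Nb) m2' mM')"
    using m2' mM unfolding marking_on_def munion_def by auto
  moreover have "usat (places (sync Na M)) m1' (places (sync Nb M)) (munion (places Nb) m2' mM') E"
    using usat_lift[OF da db fv m2'(2)] p(3) by simp
  ultimately show "\<exists>m2'. marking_on (places (sync Nb M)) m2' \<and> usat (places (sync Na M)) m1' (places (sync Nb M)) m2' E"
    by blast
  fix m2''
  assume h: "marking_on (places (sync Nb M)) m2'' \<and> usat (places (sync Na M)) m1' (places (sync Nb M)) m2'' E"
  define m2' where "m2' = (\<lambda>x. if x \<in> places Nb then m2'' x else 0)"
  have u: "usat (places Na) m1' (places Nb) m2' E" and cM: "\<forall>x\<in>places M. m1' x = m2'' x"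
    using usat_restrict[OF da db, of m1' m2'' E] h unfolding m2'_def by auto
  have "usat (places Na) ma' (places Nb) m2' E"
    using u p(3) unfolding usat_def compatible_def msat_def munion_def by (auto cong: if_cong)
  moreover have "marking_on (places Nb) m2'" unfolding m2'_def marking_on_def by auto
  ultimately obtain \<rho>2 where r2: "fires Nb mb \<rho>2 m2'" "word Na (pr1 \<rho>) = word Nb \<rho>2" using all by blast
  obtain \<rho>' where b: "set \<rho>' \<subseteq> trans (sync Nb M)" "pr1 \<rho>' = \<rho>2" "pr2 \<rho>' = pr2 \<rho>"
    "word (sync Nb M) \<rho>' = word (sync Na M) \<rho>"
    using build[OF al fires_trans[OF fr] fires_trans[OF r2(1)] r2(2)] by blast
  have f: "fires (sync Nb M) (munion (places Nb) mb m) \<rho>' (munion (places Nb) m2' mM')"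
    using inter_fires[OF wm db b(1)] r2(1) p(2) b(2,3) by simp
  have "munion (places Nb) m2' mM' = m2''"
  proof
    fix x
    show "munion (places Nb) m2' mM' x = m2'' x"
      using cM p(3) h mM da db unfolding munion_def m2'_def marking_on_def
      by (cases "x \<in> places Nb"; cases "x \<in> places M") (auto, metis disjoint_iff)
  qed
  then show "\<exists>\<rho>2. fires (sync Nb M) (msync Nb mb m) \<rho>2 m2'' \<and> word (sync Na M) \<rho> = word (sync Nb M) \<rho>2"
    using f b(4) unfolding msync_def by metis
qed

theorem theorem2:
  fixes N1 :: "('v, 't1, 'a) pnet" and N2 :: "('v, 't2, 'a) pnet" and M :: "('v, 't3, 'a) pnet"
    and m1 m2 m :: "'v \<Rightarrow> nat" and E :: "'v formula"
  assumes "wf_net N1" and "wf_net N2" and "wf_net M"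
    and "alph N1 = alph N2"
    and "marking_on (places N1) m1" and "marking_on (places N2) m2" and "marking_on (places M) m"
    and "equivalence N1 m1 E N2 m2"
    and "compatible_net N1 N2 E M"
  shows "equivalence (sync N1 M) (msync N1 m1 m) E (sync N2 M) (msync N2 m2 m)"
proof -
  have d1: "places N1 \<inter> places M = {}" and d2: "places N2 \<inter> places M = {}"
    and fv: "fvars E \<inter> places M = {}"
    using assms(9) unfolding compatible_net_def fresh_vars_def by auto
  show ?thesis
    using lift[OF assms(1,2,3,4,7) _ d1 d2 fv] lift[OF assms(2,1,3) assms(4)[symmetric] assms(7) _ d2 d1 fv]
      assms(8) unfolding equivalence_def by blast
qed

end
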